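(* Let $\mathbb X$ be a Euclidean space, $g\colon\mathbb X\to\mathbb R^m$ twice continuously differentiable, $D\subset\mathbb R^m$ convex and polyhedral, $\Phi(x):=g(x)-D$, $(\bar x,0)\in\operatorname{gph}\Phi$, and $u\in\mathbb S_{\mathbb X}$ with $\nabla g(\bar x)u\in\mathcal T_D(g(\bar x))$. For $y^*,z^*\in\mathbb R^m$ let $\mathrm{C}(u,y^*,z^* )$ denote the conditions $\nabla g(\bar x)^*y^*=0$, $\nabla^2\langle y^*,g\rangle(\bar x)(u)+\nabla g(\bar x)^*z^*=0$, $y^*,z^*\in\mathcal N_D(g(\bar x))$. Then: (i) The 2-regularity condition $\operatorname{Im}\nabla g(\bar x)+\nabla^2g(\bar x)[u,\nabla g(\bar x)^{-1}\mathcal T_D(g(\bar x))]-\mathcal T_D(g(\bar x))=\mathbb R^m$ holds if and only if: for all $y^*,z^*$, $\mathrm{C}(u,y^*,z^* )$ implies $y^*=0$. (ii) The condition "for all $y^*,z^*$: $\nabla g(\bar x)^*y^*=0$, $\nabla^2\langle y^*,g\rangle(\bar x)(u)+\nabla g(\bar x)^*z^*=0$, $y^*\in\mathcal N_{\mathcal T_D(g(\bar x))}(\nabla g(\bar x)u)$ and $z^*\in\mathcal N_{\mathcal T_D(g(\bar x))}(\nabla g(\bar x)u)$ (respectively, in the second variant, $z^*\in\mathcal T_{\mathcal N_{\mathcal T_D(g(\bar x))}(\nabla g(\bar x)u)}(y^* )$) imply $y^*=0$" is (in either variant) equivalent to: for all $y^*,z^*$, $\mathrm{C}(u,y^*,z^*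 )$ together with $\langle z^*,\nabla g(\bar x)u\rangle=0$ implies $y^*=0$. (iii) Gfrerer's condition "for all $y^*,z^*$: $\mathrm C(u,y^*,z^* )$ and $y^*\in\operatorname{argmax}\{\tfrac12\nabla^2\langle\hat y^*,g\rangle(\bar x)[u,u]\mid \hat y^*\in\mathcal N_D(g(\bar x))\cap\ker\nabla g(\bar x)^*\}$ imply $y^*=0$", and the condition "for each $s\in\mathbb X$ and all $y^*,z^*$: $\nabla g(\bar x)^*y^*=0$, $\nabla^2\langle y^*,g\rangle(\bar x)(u)+\nabla g(\bar x)^*z^*=0$, $y^*\in\mathcal N_{\mathbf T(u)}(w_s(u,0))$ and $z^*\in\mathcal N_{\mathbf T(u)}(w_s(u,0))$ (respectively, in the second variant, $z^*\in\mathcal T_{\mathcal N_{\mathbf T(u)}(w_s(u,0))}(y^* )$) imply $y^*=0$" are both (the latter in either variant) equivalent to: for all $y^*,z^*\in\mathbb R^m$ and $s\in\mathbb X$, $\mathrm C(u,y^*,z^* )$ together with $w_s(u,0)\in\mathbf T(u)$ implies $y^*=0$.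
   Context: $\mathbb S_{\mathbb X}$ is the unit sphere; $\mathcal T_Q$ and $\mathcal N_Q$ are the tangent and (limiting, here convex-analysis) normal cones. $\nabla g(\bar x)$ is the derivative, $\nabla g(\bar x)^*$ its adjoint, $\nabla g(\bar x)^{-1}A:=\{s\mid\nabla g(\bar x)s\in A\}$; $\nabla^2\langle y^*,g\rangle(\bar x)(u)\in\mathbb X$ is the Hessian of $x\mapsto\langle y^*,g(x)\rangle$ at $\bar x$ applied to $u$, $\nabla^2\langle y^*,g\rangle(\bar x)[u,u]$ the associated quadratic form, $\nabla^2 g(\bar x)[u,s]:=(\langle u,\nabla^2g_i(\bar x)s\rangle)_{i=1}^m$ and $\nabla^2g(\bar x)[u,A]:=\{\nabla^2g(\bar x)[u,s]\mid s\in A\}$. $\mathbf T(u):=\mathcal T_{\mathcal T_D(g(\bar x))}(\nabla g(\bar x)u)$ and $w_s(u,0):=\nabla g(\bar x)s+\tfrac12\nabla^2g(\bar x)[u,u]$. *)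

theory Defs
  imports "HOL-Analysis.Analysis"
begin

definition tangent_cone :: "'a::real_normed_vector set \<Rightarrow> 'a \<Rightarrow> 'a set" where
  "tangent_cone A x = {w. \<exists>t v. (\<forall>k. 0 < t k) \<and> t \<longlonglongrightarrow> 0 \<and> v \<longlonglongrightarrow> w
                              \<and> (\<forall>k. x + t k *\<^sub>R v k \<in> A)}"

definition normal_cone :: "'a::real_inner set \<Rightarrow> 'a \<Rightarrow> 'a set" where
  "normal_cone A x = (if x \<in> A then {v. \<forall>a\<in>A. v \<bullet> (a - x) \<le> 0} else {})"

definition C2_with :: "('a::euclidean_space \<Rightarrow> 'b::euclidean_space) \<Rightarrow> ('a \<Rightarrow> 'a \<Rightarrow>\<^sub>L 'b)
     \<Rightarrow> ('a \<Rightarrow> 'a \<Rightarrow>\<^sub>L ('a \<Rightarrow>\<^sub>L 'b)) \<Rightarrow> bool" where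
  "C2_with g g' g'' \<longleftrightarrow> (\<forall>x. (g has_derivative blinfun_apply (g' x)) (at x))
     \<and> (\<forall>x. (g' has_derivative blinfun_apply (g'' x)) (at x))
     \<and> continuous_on UNIV g''"

definition d2 :: "('a::euclidean_space \<Rightarrow> 'a \<Rightarrow>\<^sub>L ('a \<Rightarrow>\<^sub>L 'b::euclidean_space)) \<Rightarrow> 'a \<Rightarrow> 'a \<Rightarrow> 'a \<Rightarrow> 'b" where
  "d2 g'' xb u s = blinfun_apply (blinfun_apply (g'' xb) u) s"

text \<open>nabla^2\<langle>y,g\<rangle>(xb)(u): Hessian of x \<mapsto> \<langle>y, g x\<rangle> at xb applied to u, i.e. the vector h
  with h \<bullet> s = y \<bullet> nabla^2g(xb)[u,s] for all s.\<close>
definition hess_lag :: "('a::euclidean_space \<Rightarrow> 'a \<Rightarrow>\<^sub>L ('a \<Rightarrow>\<^sub>L 'b::euclidean_space)) \<Rightarrow> 'a \<Rightarrow> 'b \<Rightarrow> 'a \<Rightarrow> 'a" where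
  "hess_lag g'' xb y u = adjoint (d2 g'' xb u) y"

end

theory Submission
  imports Defs
begin


definition polar :: "'a::real_inner set \<Rightarrow> 'a set" where
  "polar C = {v. \<forall>x\<in>C. v \<bullet> x \<le> 0}"

definition hc :: "('i \<Rightarrow> 'a::real_inner) \<Rightarrow> 'i set \<Rightarrow> 'a set" where
  "hc a J = {w. \<forall>i\<in>J. a i \<bullet> w \<le> 0}"

definition fingen :: "'a::real_vector set \<Rightarrow> bool" where
  "fingen C \<longleftrightarrow> (\<exists>S. finite S \<and> C = convex_cone hull S)"

lemma convex_cone_polar: "convex_cone (polar C)"
  unfolding convex_cone_iff polar_def
  by (auto simp: inner_add_left mult_nonneg_nonpos add_nonpos_nonpos)

lemma convex_cone_hc: "convex_cone (hc a J)"
  unfolding convex_cone_iff hc_def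
  by (auto simp: inner_add_right mult_nonneg_nonpos add_nonpos_nonpos)

lemma polyhedron_hc:
  fixes a :: "'i \<Rightarrow> 'a::euclidean_space"
  assumes "finite J" shows "polyhedron (hc a J)"
proof -
  have "hc a J = \<Inter> ((\<lambda>i. {x. a i \<bullet> x \<le> 0}) ` J)" unfolding hc_def by auto
  then show ?thesis using assms by (auto intro!: polyhedron_Inter polyhedron_halfspace_le)
qed

lemma convex_cone_Int: "convex_cone A \<Longrightarrow> convex_cone B \<Longrightarrow> convex_cone (A \<inter> B)"
  unfolding convex_cone_iff by auto

lemma convex_cone_hyperplane: "convex_cone {v. u \<bullet> v = (0::real)}"
  unfolding convex_cone_iff by (auto simp: inner_add_right)

lemma fingen_props:
  fixes C :: "'a::euclidean_space set"
  assumes "fingen C" shows "closed C" "convex_cone C" "polyhedron C"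
  using assms unfolding fingen_def
  by (auto simp: closed_convex_cone_hull convex_cone_convex_cone_hull polyhedron_convex_cone_hull)

lemma fingen_image:
  assumes "fingen C" "linear f" shows "fingen (f ` C)"
  using assms unfolding fingen_def
  by (metis convex_cone_hull_linear_image finite_imageI)

lemma fingen_sum:
  assumes "fingen C1" "fingen C2" shows "fingen (\<Union>x\<in>C1. \<Union>y\<in>C2. {x + y})"
  using assms unfolding fingen_def
  by (metis convex_cone_hull_Un finite_UnI)

lemma MW:
  fixes C :: "'a::euclidean_space set"
  assumes "polyhedron C" "convex_cone C" shows "fingen C"
proof -
  let ?P = "C \<inter> cbox (- One) One"
  have "polyhedron ?P" using assms by auto
  moreover have "bounded ?P" by (simp add: bounded_Int)
  ultimately have "polytope ?P" by (simp add: polytope_eq_bounded_polyhedron)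
  then obtain T where T: "finite T" "?P = convex hull T" unfolding polytope_def by blast
  have "convex_cone hull T \<subseteq> C"
  proof (rule hull_minimal)
    have "T \<subseteq> ?P" by (metis T(2) hull_subset)
    then show "T \<subseteq> C" by simp
    show "convex_cone C" by (rule assms(2))
  qed
  moreover have "C \<subseteq> convex_cone hull T"
  proof
    fix x assume x: "x \<in> C"
    show "x \<in> convex_cone hull T"
    proof (cases "x = 0")
      case True then show ?thesis by (simp add: convex_cone_hull_contains_0)
    next
      case False
      define x' where "x' = (1 / norm x) *\<^sub>R x"
      have "x' \<in> C" using x assms(2) unfolding x'_def by (simp add: convex_cone_scaleR)
      moreover have "norm x' = 1" using False by (simp add: x'_def)
      then have "x' \<in> cbox (- One) One"
        unfolding mem_box using Basis_le_norm[of _ x'] by (force simp: abs_le_iff)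
      ultimately have "x' \<in> convex hull T" using T by auto
      then have "x' \<in> convex_cone hull T" using convex_hull_subset_convex_cone_hull by blast
      then have "norm x *\<^sub>R x' \<in> convex_cone hull T" by (simp add: convex_cone_hull_mul)
      then show ?thesis using False by (simp add: x'_def)
    qed
  qed
  ultimately show ?thesis unfolding fingen_def using T by blast
qed

lemma SEP:
  fixes C :: "'a::euclidean_space set"
  assumes "convex_cone C" "closed C" "z \<notin> C"
  shows "\<exists>c. (\<forall>x\<in>C. c \<bullet> x \<le> 0) \<and> c \<bullet> z > 0"
proof -
  have cv: "convex C" using assms(1) by (simp add: convex_cone_def)
  obtain a b where ab: "a \<bullet> z < b" "\<forall>x\<in>C. a \<bullet> x > b"
    using separating_hyperplane_closed_point[OF cv assms(2,3)] by blast
  have "0 \<in> C" using assms(1) by (simp add: convex_cone_contains_0)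
  then have b: "b < 0" using ab by auto
  have "a \<bullet> x \<ge> 0" if "x \<in> C" for x
  proof (rule ccontr)
    assume "\<not> a \<bullet> x \<ge> 0"
    then have neg: "a \<bullet> x < 0" by simp
    define t where "t = b / (a \<bullet> x)"
    have "t \<ge> 0" using neg b by (simp add: t_def divide_nonpos_neg)
    then have "t *\<^sub>R x \<in> C" using assms(1) that by (simp add: convex_cone_scaleR)
    then have "a \<bullet> (t *\<^sub>R x) > b" using ab by auto
    moreover have "a \<bullet> (t *\<^sub>R x) = b" using neg by (simp add: t_def)
    ultimately show False by simp
  qed
  then show ?thesis using ab b
    by (intro exI[of _ "-a"]) auto
qed

lemma FK:
  fixes a :: "'i \<Rightarrow> 'a::euclidean_space"
  assumes "finite J" shows "polar (hc a J) = convex_cone hull (a ` J)"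
proof
  show "convex_cone hull (a ` J) \<subseteq> polar (hc a J)"
  proof (rule hull_minimal)
    show "a ` J \<subseteq> polar (hc a J)" by (auto simp: polar_def hc_def inner_commute)
  qed (rule convex_cone_polar)
  show "polar (hc a J) \<subseteq> convex_cone hull (a ` J)"
  proof
    fix v assume v: "v \<in> polar (hc a J)"
    show "v \<in> convex_cone hull (a ` J)"
    proof (rule ccontr)
      assume "v \<notin> convex_cone hull (a ` J)"
      then obtain c where c: "\<forall>x\<in>convex_cone hull (a ` J). c \<bullet> x \<le> 0" "c \<bullet> v > 0"
        using SEP[OF convex_cone_convex_cone_hull closed_convex_cone_hull] assms by blast
      have "a i \<bullet> c \<le> 0" if "i \<in> J" for i
      proof -
        have "a i \<in> convex_cone hull (a ` J)" using that by (simp add: hull_inc)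
        then show ?thesis using c(1) by (metis inner_commute)
      qed
      then have "c \<in> hc a J" unfolding hc_def by blast
      then have "v \<bullet> c \<le> 0" using v unfolding polar_def by auto
      then show False using c(2) by (simp add: inner_commute)
    qed
  qed
qed

lemma NC_cone:
  assumes "convex_cone T" "w \<in> T"
  shows "normal_cone T w = {v. v \<in> polar T \<and> v \<bullet> w = 0}"
proof (rule set_eqI, rule iffI)
  fix v assume v: "v \<in> normal_cone T w"
  then have v': "\<forall>t\<in>T. v \<bullet> (t - w) \<le> 0" using assms by (simp add: normal_cone_def)
  have "0 \<in> T" using assms by (simp add: convex_cone_contains_0)
  then have "v \<bullet> w \<ge> 0" using v' by auto
  moreover have "(2::real) *\<^sub>R w \<in> T" using assms by (simp add: convex_cone_scaleR)
  then have "v \<bullet> w \<le> 0" using v'[rule_format, of "2 *\<^sub>R w"] by (simp add: inner_diff_right)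
  ultimately have vw: "v \<bullet> w = 0" by simp
  have "v \<bullet> t \<le> 0" if "t \<in> T" for t
  proof -
    have "w + t \<in> T" using assms that by (simp add: convex_cone_add)
    then show ?thesis using v' vw by (force simp: inner_diff_right inner_add_right)
  qed
  then show "v \<in> {v. v \<in> polar T \<and> v \<bullet> w = 0}" using vw by (simp add: polar_def)
next
  fix v assume "v \<in> {v. v \<in> polar T \<and> v \<bullet> w = 0}"
  then show "v \<in> normal_cone T w" using assms
    by (auto simp: normal_cone_def polar_def inner_diff_right)
qed


lemma G1:
  assumes v: "v \<in> normal_cone C x" and w: "w \<in> tangent_cone C x"
  shows "v \<bullet> w \<le> 0"
proof -
  obtain t vs where t: "\<forall>k. 0 < t k" "t \<longlonglongrightarrow> 0" "vs \<longlonglongrightarrow> w" "\<forall>k. x + t k *\<^sub>R vs k \<in> C"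
    using w unfolding tangent_cone_def by blast
  have xC: "x \<in> C" using v unfolding normal_cone_def by (auto split: if_splits)
  have vC: "\<forall>a\<in>C. v \<bullet> (a - x) \<le> 0" using v xC unfolding normal_cone_def by auto
  have le: "v \<bullet> vs k \<le> 0" for k
  proof -
    have "v \<bullet> (x + t k *\<^sub>R vs k - x) \<le> 0" using vC t(4) by blast
    then have "t k * (v \<bullet> vs k) \<le> 0" by simp
    then show ?thesis using t(1) by (simp add: mult_le_0_iff) (meson not_less)
  qed
  have "(\<lambda>k. v \<bullet> vs k) \<longlonglongrightarrow> v \<bullet> w" by (intro tendsto_intros t(3))
  then show ?thesis using le by (meson LIMSEQ_le_const2)
qed

lemma G2:
  assumes e: "0 < e" and h: "\<And>t. 0 < t \<Longrightarrow> t \<le> e \<Longrightarrow> x + t *\<^sub>R w \<in> C"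
  shows "w \<in> tangent_cone C x"
proof -
  define t where "t k = e / real (Suc k)" for k
  have "(\<lambda>k. e / real k) \<longlonglongrightarrow> 0" by (rule lim_const_over_n)
  then have t0: "t \<longlonglongrightarrow> 0" unfolding t_def using LIMSEQ_Suc by blast
  have tp: "\<forall>k. 0 < t k" using e by (simp add: t_def)
  have "t k \<le> e" for k using e by (simp add: t_def divide_le_eq)
  then have "\<forall>k. x + t k *\<^sub>R w \<in> C" using h tp by blast
  then show ?thesis unfolding tangent_cone_def using t0 tp
    by (intro CollectI exI[of _ t] exI[of _ "\<lambda>_. w"]) auto
qed

lemma G2_cone:
  assumes "convex_cone N" "y \<in> N" "z \<in> N" shows "z \<in> tangent_cone N y"
  by (rule G2[of 1]) (use assms in \<open>auto simp: convex_cone_add convex_cone_scaleR\<close>)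

lemma LOC1:
  fixes a :: "'a::real_inner"
  assumes "a \<bullet> x \<le> b" "a \<bullet> x = b \<longrightarrow> a \<bullet> w \<le> 0"
  shows "\<exists>e>0. \<forall>t. 0 \<le> t \<and> t \<le> e \<longrightarrow> a \<bullet> (x + t *\<^sub>R w) \<le> b"
proof (cases "a \<bullet> w \<le> 0")
  case True
  have "a \<bullet> (x + t *\<^sub>R w) \<le> b" if "0 \<le> t" for t
  proof -
    have "t * (a \<bullet> w) \<le> 0" using True that by (simp add: mult_nonneg_nonpos)
    then show ?thesis using assms(1) by (simp add: inner_add_right)
  qed
  then show ?thesis by (intro exI[of _ 1]) auto
next
  case False
  then have pos: "a \<bullet> w > 0" and lt: "a \<bullet> x < b" using assms by auto
  show ?thesis
  proof (intro exI[of _ "(b - a \<bullet> x) / (a \<bullet> w)"] conjI allI impI)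
    show "0 < (b - a \<bullet> x) / (a \<bullet> w)" using pos lt by simp
    fix t assume "0 \<le> t \<and> t \<le> (b - a \<bullet> x) / (a \<bullet> w)"
    then have "t * (a \<bullet> w) \<le> b - a \<bullet> x" using pos by (simp add: le_divide_eq)
    then show "a \<bullet> (x + t *\<^sub>R w) \<le> b" by (simp add: inner_add_right)
  qed
qed

lemma LOC:
  fixes a :: "'i \<Rightarrow> 'a::real_inner"
  assumes "finite I"
  shows "(\<forall>i\<in>I. a i \<bullet> x \<le> b i) \<Longrightarrow> (\<forall>i\<in>I. a i \<bullet> x = b i \<longrightarrow> a i \<bullet> w \<le> 0) \<Longrightarrow>
     \<exists>e>0. \<forall>t. 0 \<le> t \<and> t \<le> e \<longrightarrow> (\<forall>i\<in>I. a i \<bullet> (x + t *\<^sub>R w) \<le> b i)"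
  using assms
proof (induction I rule: finite_induct)
  case empty
  then show ?case by (intro exI[of _ 1]) auto
next
  case (insert j I)
  then obtain e where e: "e > 0" "\<forall>t. 0 \<le> t \<and> t \<le> e \<longrightarrow> (\<forall>i\<in>I. a i \<bullet> (x + t *\<^sub>R w) \<le> b i)"
    by auto
  obtain e' where e': "e' > 0" "\<forall>t. 0 \<le> t \<and> t \<le> e' \<longrightarrow> a j \<bullet> (x + t *\<^sub>R w) \<le> b j"
    using LOC1[of "a j" x "b j" w] insert.prems by auto
  show ?case using e e' by (intro exI[of _ "min e e'"]) auto
qed

lemma PT:
  fixes a :: "'i \<Rightarrow> 'a::real_inner"
  assumes "finite I" "\<forall>i\<in>I. a i \<bullet> x \<le> b i"
  shows "tangent_cone {x. \<forall>i\<in>I. a i \<bullet> x \<le> b i} x = {w. \<forall>i\<in>I. a i \<bullet> x = b i \<longrightarrow> a i \<bullet> w \<le> 0}"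
    (is "tangent_cone ?P x = ?R")
proof (rule set_eqI, rule iffI)
  fix w assume w: "w \<in> tangent_cone ?P x"
  show "w \<in> ?R"
  proof (clarify)
    fix i assume i: "i \<in> I" "a i \<bullet> x = b i"
    have "a i \<in> normal_cone ?P x" using assms i
      by (auto simp: normal_cone_def inner_diff_right)
    then show "a i \<bullet> w \<le> 0" using G1 w by blast
  qed
next
  fix w assume w: "w \<in> ?R"
  have w': "\<forall>i\<in>I. a i \<bullet> x = b i \<longrightarrow> a i \<bullet> w \<le> 0" using w by simp
  obtain e where e: "e > 0" "\<forall>t. 0 \<le> t \<and> t \<le> e \<longrightarrow> (\<forall>i\<in>I. a i \<bullet> (x + t *\<^sub>R w) \<le> b i)"
    using LOC[OF assms(1) assms(2) w'] by blast
  show "w \<in> tangent_cone ?P x"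
    by (rule G2[OF e(1)]) (use e(2) in auto)
qed

lemma polyhedron_index:
  fixes D :: "'a::euclidean_space set"
  assumes "polyhedron D"
  obtains F :: "'a::euclidean_space set set" and a b where "finite F" "D = {x. \<forall>i\<in>F. a i \<bullet> x \<le> b i}"
proof -
  obtain F where F: "finite F" "D = \<Inter> F" "\<forall>h\<in>F. \<exists>a b. a \<noteq> 0 \<and> h = {x. a \<bullet> x \<le> b}"
    using assms unfolding polyhedron_def by blast
  then obtain a b where ab: "\<forall>h\<in>F. h = {x. a h \<bullet> x \<le> b h}" by metis
  have "D = {x. \<forall>i\<in>F. a i \<bullet> x \<le> b i}" using F(2) ab by auto
  then show ?thesis by (rule that[OF F(1)])
qed

lemma NDP:
  assumes "convex D" "x \<in> D"
  shows "normal_cone D x = polar (tangent_cone D x)"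
proof (rule set_eqI, rule iffI)
  fix v assume "v \<in> normal_cone D x"
  then show "v \<in> polar (tangent_cone D x)" using G1 unfolding polar_def by blast
next
  fix v assume v: "v \<in> polar (tangent_cone D x)"
  have "v \<bullet> (d - x) \<le> 0" if d: "d \<in> D" for d
  proof -
    have "d - x \<in> tangent_cone D x"
    proof (rule G2[of 1])
      fix t :: real assume t: "0 < t" "t \<le> 1"
      have "x + t *\<^sub>R (d - x) = (1 - t) *\<^sub>R x + t *\<^sub>R d" by (simp add: algebra_simps)
      then show "x + t *\<^sub>R (d - x) \<in> D" using assms d t by (simp add: convexD_alt)
    qed simp
    then show ?thesis using v unfolding polar_def by blast
  qed
  then show "v \<in> normal_cone D x" using assms(2) by (simp add: normal_cone_def)
qed

lemma TR:
  fixes L :: "'a::euclidean_space \<Rightarrow> 'b::euclidean_space"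
  assumes "polyhedron N" "convex_cone N" "linear L" "y \<in> N" "L y = 0" "z \<in> tangent_cone N y"
  shows "\<exists>n\<in>N. L n = L z"
proof (rule ccontr)
  assume "\<not> ?thesis"
  then have nz: "L z \<notin> L ` N" by auto
  have fg: "fingen (L ` N)" by (rule fingen_image[OF MW[OF assms(1,2)] assms(3)])
  obtain c where c: "\<forall>q\<in>L ` N. c \<bullet> q \<le> 0" "c \<bullet> L z > 0"
    using SEP[OF fingen_props(2)[OF fg] fingen_props(1)[OF fg] nz] by blast
  define v where "v = adjoint L c"
  have vx: "v \<bullet> x = c \<bullet> L x" for x
    using adjoint_works[OF assms(3), of x c] by (simp add: v_def inner_commute)
  have "v \<in> normal_cone N y"
    using assms(4,5) c(1) by (auto simp: normal_cone_def inner_diff_right vx)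
  then have "v \<bullet> z \<le> 0" using G1 assms(6) by blast
  then show False using c(2) vx by simp
qed

lemma ATT:
  fixes c :: "'i \<Rightarrow> 'a::euclidean_space"
  assumes "finite I" "s0 \<in> {s. \<forall>i\<in>I. c i \<bullet> s \<le> e i}"
    and bd: "\<And>s. s \<in> {s. \<forall>i\<in>I. c i \<bullet> s \<le> e i} \<Longrightarrow> m \<le> h \<bullet> s"
  shows "\<exists>s\<in>{s. \<forall>i\<in>I. c i \<bullet> s \<le> e i}. \<forall>s'\<in>{s. \<forall>i\<in>I. c i \<bullet> s \<le> e i}. h \<bullet> s \<le> h \<bullet> s'"
proof -
  let ?F = "{s. \<forall>i\<in>I. c i \<bullet> s \<le> e i}"
  define gvec :: "'i option \<Rightarrow> 'a \<times> real" where "gvec q = (case q of None \<Rightarrow> (0, -1) | Some i \<Rightarrow> (c i, - e i))" for q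
  let ?J = "insert None (Some ` I)"
  let ?H = "hc gvec ?J"
  have Heq: "?H = {(s,t). 0 \<le> t \<and> (\<forall>i\<in>I. c i \<bullet> s \<le> t * e i)}"
    unfolding hc_def gvec_def by (auto simp: inner_Pair algebra_simps)
  have finJ: "finite ?J" using assms(1) by simp
  define L where "L p = (h \<bullet> fst p, snd p)" for p :: "'a \<times> real"
  have linL: "linear L" unfolding L_def
    by (intro linearI) (auto simp: inner_add_right)
  have fg: "fingen (L ` ?H)"
    by (rule fingen_image[OF MW[OF polyhedron_hc[OF finJ] convex_cone_hc] linL])
  define S where "S = (\<lambda>v. (v, 1::real)) -` (L ` ?H)"
  have clS: "closed S" unfolding S_def
    by (rule closed_vimage[OF fingen_props(1)[OF fg]]) (intro continuous_intros)
  have Seq: "S = (\<lambda>s. h \<bullet> s) ` ?F"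
  proof (rule set_eqI, rule iffI)
    fix v assume "v \<in> S"
    then obtain s t where "(s, t) \<in> ?H" "L (s, t) = (v, 1)" unfolding S_def by auto
    then show "v \<in> (\<lambda>s. h \<bullet> s) ` ?F" unfolding Heq L_def by auto
  next
    fix v assume "v \<in> (\<lambda>s. h \<bullet> s) ` ?F"
    then obtain s where "s \<in> ?F" "v = h \<bullet> s" by auto
    then have "(s, 1) \<in> ?H" "L (s, 1) = (v, 1)" unfolding Heq L_def by auto
    then show "v \<in> S" unfolding S_def by (metis image_eqI vimage_eq)
  qed
  have ne: "S \<noteq> {}" using assms(2) Seq by auto
  have bb: "bdd_below S" using bd Seq by (auto intro!: bdd_belowI[of _ m])
  have "Inf S \<in> S" by (rule closed_contains_Inf[OF ne bb clS])
  then obtain s where s: "s \<in> ?F" "Inf S = h \<bullet> s" using Seq by auto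
  have "h \<bullet> s \<le> h \<bullet> s'" if "s' \<in> ?F" for s'
  proof -
    have "h \<bullet> s' \<in> S" using that Seq by auto
    then show ?thesis using s(2) cInf_lower[OF _ bb] by metis
  qed
  then show ?thesis using s(1) by blast
qed


theorem proposition3p11:
  fixes g :: "'a::euclidean_space \<Rightarrow> real ^ 'm"
    and g' :: "'a \<Rightarrow> ('a \<Rightarrow>\<^sub>L (real ^ 'm))"
    and g'' :: "'a \<Rightarrow> ('a \<Rightarrow>\<^sub>L ('a \<Rightarrow>\<^sub>L (real ^ 'm)))"
    and D :: "(real ^ 'm) set" and xb u :: 'a
  assumes C2: "C2_with g g' g''"
    and polyD: "polyhedron D"
    and gph: "g xb \<in> D"
    and u_sphere: "norm u = 1"
    and u_tan: "blinfun_apply (g' xb) u \<in> tangent_cone D (g xb)"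
  shows
   "let A = blinfun_apply (g' xb); As = adjoint A; TD = tangent_cone D (g xb);
        ND = normal_cone D (g xb);
        C = (\<lambda>y z. As y = 0 \<and> hess_lag g'' xb y u + As z = 0 \<and> y \<in> ND \<and> z \<in> ND);
        N1 = normal_cone TD (A u);
        Tu = tangent_cone TD (A u);
        w = (\<lambda>s. A s + (1/2) *\<^sub>R d2 g'' xb u u)
    in
    (({a + b - c | a b c. a \<in> range A \<and> b \<in> d2 g'' xb u ` {s. A s \<in> TD} \<and> c \<in> TD} = UNIV)
       \<longleftrightarrow> (\<forall>y z. C y z \<longrightarrow> y = 0))
  \<and> ((\<forall>y z. As y = 0 \<and> hess_lag g'' xb y u + As z = 0 \<and> y \<in> N1 \<and> z \<in> N1 \<longrightarrow> y = 0)
       \<longleftrightarrow> (\<forall>y z. C y z \<and> z \<bullet> A u = 0 \<longrightarrow> y = 0))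
  \<and> ((\<forall>y z. As y = 0 \<and> hess_lag g'' xb y u + As z = 0 \<and> y \<in> N1 \<and> z \<in> tangent_cone N1 y \<longrightarrow> y = 0)
       \<longleftrightarrow> (\<forall>y z. C y z \<and> z \<bullet> A u = 0 \<longrightarrow> y = 0))
  \<and> ((\<forall>y z. C y z \<and> is_arg_max (\<lambda>yh. (1/2) * (yh \<bullet> d2 g'' xb u u)) (\<lambda>yh. yh \<in> ND \<and> As yh = 0) y
            \<longrightarrow> y = 0)
       \<longleftrightarrow> (\<forall>y z s. C y z \<and> w s \<in> Tu \<longrightarrow> y = 0))
  \<and> ((\<forall>s y z. As y = 0 \<and> hess_lag g'' xb y u + As z = 0 \<and> y \<in> normal_cone Tu (w s)
              \<and> z \<in> normal_cone Tu (w s) \<longrightarrow> y = 0)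
       \<longleftrightarrow> (\<forall>y z s. C y z \<and> w s \<in> Tu \<longrightarrow> y = 0))
  \<and> ((\<forall>s y z. As y = 0 \<and> hess_lag g'' xb y u + As z = 0 \<and> y \<in> normal_cone Tu (w s)
              \<and> z \<in> tangent_cone (normal_cone Tu (w s)) y \<longrightarrow> y = 0)
       \<longleftrightarrow> (\<forall>y z s. C y z \<and> w s \<in> Tu \<longrightarrow> y = 0))"
proof -
  define A where "A = blinfun_apply (g' xb)"
  define B where "B = blinfun_apply (blinfun_apply (g'' xb) u)"
  define As where "As = adjoint A"
  have linA: "linear A" unfolding A_def by (simp add: bounded_linear.linear blinfun.bounded_linear_right)
  have linB: "linear B" unfolding B_def by (simp add: bounded_linear.linear blinfun.bounded_linear_right)
  have linAs: "linear As" unfolding As_def by (rule adjoint_linear[OF linA])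
  have linBs: "linear (adjoint B)" by (rule adjoint_linear[OF linB])
  have B_eq: "d2 g'' xb u = B" unfolding B_def d2_def by (rule ext) simp
  have hess_eq: "hess_lag g'' xb y u = adjoint B y" for y by (simp add: hess_lag_def B_eq)
  have adjA: "As y \<bullet> s = y \<bullet> A s" for y s
    using adjoint_works[OF linA, of s y] unfolding As_def by (simp add: inner_commute)
  have adjB: "adjoint B y \<bullet> s = y \<bullet> B s" for y s
    using adjoint_works[OF linB, of s y] by (simp add: inner_commute)
  obtain F :: "(real^'m) set set" and a b where finF: "finite F" and Deq: "D = {x. \<forall>i\<in>F. a i \<bullet> x \<le> b i}"
    by (rule polyhedron_index[OF polyD])
  define x0 where "x0 = g xb"
  have x0D: "\<forall>i\<in>F. a i \<bullet> x0 \<le> b i" using gph Deq x0_def by auto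
  define I1 where "I1 = {i\<in>F. a i \<bullet> x0 = b i}"
  have finI1: "finite I1" using finF I1_def by simp
  define TD where "TD = hc a I1"
  have TD_eq: "tangent_cone D (g xb) = TD"
    unfolding Deq TD_def hc_def I1_def x0_def[symmetric] PT[OF finF x0D] by auto
  have ND_eq: "normal_cone D (g xb) = polar TD"
    using NDP[OF polyhedron_imp_convex[OF polyD] gph] TD_eq by simp
  have ND_hull: "polar TD = convex_cone hull (a ` I1)" unfolding TD_def by (rule FK[OF finI1])
  have AuTD: "A u \<in> TD" using u_tan TD_eq A_def by simp
  define I2 where "I2 = {i\<in>I1. a i \<bullet> A u = 0}"
  have finI2: "finite I2" using finI1 I2_def by simp
  define Tu where "Tu = hc a I2"
  have Tu_eq: "tangent_cone TD (A u) = Tu"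
  proof -
    have "TD = {x. \<forall>i\<in>I1. a i \<bullet> x \<le> (\<lambda>_. 0) i}" unfolding TD_def hc_def by simp
    moreover have "\<forall>i\<in>I1. a i \<bullet> A u \<le> (\<lambda>_. 0) i" using AuTD unfolding TD_def hc_def by simp
    ultimately show ?thesis unfolding Tu_def hc_def I2_def using PT[of I1 a "A u" "\<lambda>_. 0", OF finI1] by auto
  qed
  have cTD: "convex_cone TD" unfolding TD_def by (rule convex_cone_hc)
  have pTD: "polyhedron TD" unfolding TD_def by (rule polyhedron_hc[OF finI1])
  have cTu: "convex_cone Tu" unfolding Tu_def by (rule convex_cone_hc)
  have Tu_hull: "polar Tu = convex_cone hull (a ` I2)" unfolding Tu_def by (rule FK[OF finI2])
  have TD_Tu: "TD \<subseteq> Tu" unfolding TD_def Tu_def hc_def I2_def by auto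
  have polTu_ND: "polar Tu \<subseteq> polar TD" using TD_Tu unfolding polar_def by auto
  have N1_eq: "normal_cone TD (A u) = {v \<in> polar TD. v \<bullet> A u = 0}" by (rule NC_cone[OF cTD AuTD])
  have N1_polTu: "v \<in> polar Tu" if "v \<in> polar TD" "v \<bullet> A u = 0" for v
  proof -
    have "v \<in> normal_cone TD (A u)" using N1_eq that by simp
    then show ?thesis using G1 Tu_eq unfolding polar_def by blast
  qed
  have yAu: "y \<bullet> A u = 0" if "As y = 0" for y using adjA[of y u] that by simp
  have ND_TD: "v \<bullet> t \<le> 0" if "v \<in> polar TD" "t \<in> TD" for v t using that unfolding polar_def by auto
  have Cd: "y \<bullet> B u = - (z \<bullet> A u)" if "adjoint B y + As z = 0" for y z
  proof -
    have "adjoint B y = - As z" using that by (simp add: eq_neg_iff_add_eq_0)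
    then show ?thesis using adjB[of y u] adjA[of z u] by simp
  qed
  have fgU0: "fingen (UNIV::'a set)" by (rule MW) (auto simp: convex_cone_iff)
  have A00: "A 0 = 0" using linA by (simp add: linear_0)
  have TD00: "0 \<in> TD" using cTD by (simp add: convex_cone_contains_0)
  have AsZ: "As c = 0" if cA: "\<And>p. c \<bullet> A p \<le> 0" for c
  proof -
    have "c \<bullet> A (- As c) \<le> 0" by (rule cA)
    then have "c \<bullet> A (As c) \<ge> 0" using linA by (simp add: linear_neg)
    then have "c \<bullet> A (As c) = 0" using cA[of "As c"] by simp
    then have "As c \<bullet> As c = 0" using adjA[of c "As c"] by simp
    then show "As c = 0" by simp
  qed
  have P1: "({a + b - c | a b c. a \<in> range A \<and> b \<in> B ` {s. A s \<in> TD} \<and> c \<in> TD} = UNIV)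
       \<longleftrightarrow> (\<forall>y z. As y = 0 \<and> adjoint B y + As z = 0 \<and> y \<in> polar TD \<and> z \<in> polar TD \<longrightarrow> y = 0)"
  proof
    assume SU: "{a + b - c | a b c. a \<in> range A \<and> b \<in> B ` {s. A s \<in> TD} \<and> c \<in> TD} = UNIV"
    show "\<forall>y z. As y = 0 \<and> adjoint B y + As z = 0 \<and> y \<in> polar TD \<and> z \<in> polar TD \<longrightarrow> y = 0"
    proof (intro allI impI)
      fix y z assume h: "As y = 0 \<and> adjoint B y + As z = 0 \<and> y \<in> polar TD \<and> z \<in> polar TD"
      have "-y \<in> {a + b - c | a b c. a \<in> range A \<and> b \<in> B ` {s. A s \<in> TD} \<and> c \<in> TD}" using SU by simp
      then obtain p s c where pc: "-y = A p + B s - c" "A s \<in> TD" "c \<in> TD" by blast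
      have e1: "y \<bullet> A p = 0" using adjA[of y p] h by simp
      have hB: "adjoint B y = - As z" using h by (simp add: eq_neg_iff_add_eq_0)
      have e2: "y \<bullet> B s = - (z \<bullet> A s)" using adjB[of y s] adjA[of z s] hB by simp
      have e3: "z \<bullet> A s \<le> 0" using ND_TD h pc(2) by blast
      have e4: "y \<bullet> c \<le> 0" using ND_TD h pc(3) by blast
      have "y \<bullet> (-y) = y \<bullet> A p + y \<bullet> B s - y \<bullet> c" unfolding pc(1) by (simp add: inner_add_right inner_diff_right)
      then have "y \<bullet> y \<le> 0" using e1 e2 e3 e4 by simp
      then show "y = 0" by (metis antisym inner_eq_zero_iff inner_ge_zero)
    qed
  next
    assume H: "\<forall>y z. As y = 0 \<and> adjoint B y + As z = 0 \<and> y \<in> polar TD \<and> z \<in> polar TD \<longrightarrow> y = 0"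
    define K where "K = hc (\<lambda>i. As (a i)) I1"
    have K_eq: "{s. A s \<in> TD} = K" unfolding K_def TD_def hc_def by (auto simp: adjA)
    define S where "S = {a + b - c | a b c. a \<in> range A \<and> b \<in> B ` K \<and> c \<in> TD}"
    have fgU: "fingen (UNIV::'a set)" by (rule MW) (auto simp: convex_cone_iff)
    have fgK: "fingen K" unfolding K_def by (rule MW[OF polyhedron_hc[OF finI1] convex_cone_hc])
    have fgTD: "fingen TD" by (rule MW[OF pTD cTD])
    have sumI: "v \<in> (\<Union>x\<in>X. \<Union>y\<in>Y. {x + y})" if "x \<in> X" "y \<in> Y" "v = x + y" for v x y and X Y :: "(real^'m) set"
      using that by blast
    have S_eq: "S = (\<Union>x\<in>(\<Union>x\<in>A ` UNIV. \<Union>y\<in>B ` K. {x + y}). \<Union>y\<in>uminus ` TD. {x + y})"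
    proof (rule set_eqI, rule iffI)
      fix v assume "v \<in> S"
      then obtain p s c where v: "v = A p + B s - c" "s \<in> K" "c \<in> TD" unfolding S_def by blast
      have "A p + B s \<in> (\<Union>x\<in>A ` UNIV. \<Union>y\<in>B ` K. {x + y})" by (rule sumI[of "A p" _ "B s"]) (use v in auto)
      then show "v \<in> (\<Union>x\<in>(\<Union>x\<in>A ` UNIV. \<Union>y\<in>B ` K. {x + y}). \<Union>y\<in>uminus ` TD. {x + y})"
        by (rule sumI[of _ _ "- c"]) (use v in auto)
    next
      fix v assume "v \<in> (\<Union>x\<in>(\<Union>x\<in>A ` UNIV. \<Union>y\<in>B ` K. {x + y}). \<Union>y\<in>uminus ` TD. {x + y})"
      then obtain p s c where v: "v = A p + B s + - c" "s \<in> K" "c \<in> TD" by blast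
      have "v = A p + B s - c" "A p \<in> range A" "B s \<in> B ` K" using v by auto
      then show "v \<in> S" unfolding S_def using v(3) by blast
    qed
    have fgS: "fingen S" unfolding S_eq by (intro fingen_sum fingen_image fgU fgK fgTD linA linB linear_uminus)
    have "S = UNIV"
    proof (rule ccontr)
      assume "S \<noteq> UNIV" then obtain z0 where z0: "z0 \<notin> S" by auto
      obtain c where c: "\<forall>x\<in>S. c \<bullet> x \<le> 0" "c \<bullet> z0 > 0"
        using SEP[OF fingen_props(2)[OF fgS] fingen_props(1)[OF fgS] z0] by blast
      have TD0: "0 \<in> TD" using cTD by (simp add: convex_cone_contains_0)
      have A0: "A 0 = 0" using linA by (simp add: linear_0)
      have B0: "B 0 = 0" using linB by (simp add: linear_0)
      have K0: "0 \<in> K" using K_eq TD0 A0 by auto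
      have inS: "A p + B s - t \<in> S" if "s \<in> K" "t \<in> TD" for p s t unfolding S_def using that by blast
      have cA: "c \<bullet> A p \<le> 0" for p using inS[OF K0 TD0, of p] c(1) B0 by auto
      have "c \<bullet> A (- As c) \<le> 0" by (rule cA)
      then have "c \<bullet> A (As c) \<ge> 0" using linA by (simp add: linear_neg)
      then have "c \<bullet> A (As c) = 0" using cA[of "As c"] by simp
      then have "As c \<bullet> As c = 0" using adjA[of c "As c"] by simp
      then have Asc: "As c = 0" by simp
      have mcND: "-c \<in> polar TD" unfolding polar_def
      proof (clarify)
        fix t assume "t \<in> TD"
        then have "c \<bullet> (A 0 + B 0 - t) \<le> 0" using inS[OF K0] c(1) by blast
        then show "- c \<bullet> t \<le> 0" using A0 B0 by simp
      qed
      have BcK: "adjoint B c \<in> polar K" unfolding polar_def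
      proof (clarify)
        fix s assume "s \<in> K"
        then have "c \<bullet> (A 0 + B s - 0) \<le> 0" using inS[OF _ TD0] c(1) by blast
        then show "adjoint B c \<bullet> s \<le> 0" using A0 adjB by simp
      qed
      have polK: "polar K = As ` polar TD"
      proof -
        have "polar K = convex_cone hull ((\<lambda>i. As (a i)) ` I1)" unfolding K_def by (rule FK[OF finI1])
        also have "\<dots> = convex_cone hull (As ` (a ` I1))" by (simp add: image_image)
        also have "\<dots> = As ` (convex_cone hull (a ` I1))" by (rule convex_cone_hull_linear_image[OF linAs])
        finally show ?thesis using ND_hull by simp
      qed
      obtain z where z: "z \<in> polar TD" "adjoint B c = As z" using BcK polK by auto
      have "As (-c) = 0 \<and> adjoint B (-c) + As z = 0 \<and> -c \<in> polar TD \<and> z \<in> polar TD"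
        using Asc z mcND linAs linBs by (simp add: linear_neg)
      then have "-c = 0" using H by blast
      then show False using c(2) by simp
    qed
    then show "{a + b - c | a b c. a \<in> range A \<and> b \<in> B ` {s. A s \<in> TD} \<and> c \<in> TD} = UNIV"
      unfolding K_eq S_def by simp
  qed
  have P2: "(\<forall>y z. As y = 0 \<and> adjoint B y + As z = 0 \<and> y \<in> {v \<in> polar TD. v \<bullet> A u = 0} \<and> z \<in> {v \<in> polar TD. v \<bullet> A u = 0} \<longrightarrow> y = 0)
       \<longleftrightarrow> (\<forall>y z. (As y = 0 \<and> adjoint B y + As z = 0 \<and> y \<in> polar TD \<and> z \<in> polar TD) \<and> z \<bullet> A u = 0 \<longrightarrow> y = 0)"
  proof
    assume L: "\<forall>y z. As y = 0 \<and> adjoint B y + As z = 0 \<and> y \<in> {v \<in> polar TD. v \<bullet> A u = 0} \<and> z \<in> {v \<in> polar TD. v \<bullet> A u = 0} \<longrightarrow> y = 0"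
    show "\<forall>y z. (As y = 0 \<and> adjoint B y + As z = 0 \<and> y \<in> polar TD \<and> z \<in> polar TD) \<and> z \<bullet> A u = 0 \<longrightarrow> y = 0"
    proof (intro allI impI)
      fix y z assume h: "(As y = 0 \<and> adjoint B y + As z = 0 \<and> y \<in> polar TD \<and> z \<in> polar TD) \<and> z \<bullet> A u = 0"
      then have "y \<bullet> A u = 0" using yAu by blast
      then show "y = 0" using L h by blast
    qed
  next
    assume R: "\<forall>y z. (As y = 0 \<and> adjoint B y + As z = 0 \<and> y \<in> polar TD \<and> z \<in> polar TD) \<and> z \<bullet> A u = 0 \<longrightarrow> y = 0"
    show "\<forall>y z. As y = 0 \<and> adjoint B y + As z = 0 \<and> y \<in> {v \<in> polar TD. v \<bullet> A u = 0} \<and> z \<in> {v \<in> polar TD. v \<bullet> A u = 0} \<longrightarrow> y = 0"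
      using R by blast
  qed
  define N1 where "N1 = {v \<in> polar TD. v \<bullet> A u = 0}"
  have N1_int: "N1 = convex_cone hull (a ` I1) \<inter> {v. A u \<bullet> v = 0}"
    unfolding N1_def ND_hull[symmetric] by (auto simp: inner_commute)
  have pN1: "polyhedron N1" unfolding N1_int
    by (intro polyhedron_Int polyhedron_convex_cone_hull polyhedron_hyperplane finite_imageI finI1)
  have cN1: "convex_cone N1" unfolding N1_int
    by (intro convex_cone_Int convex_cone_convex_cone_hull convex_cone_hyperplane)
  have P3: "(\<forall>y z. As y = 0 \<and> adjoint B y + As z = 0 \<and> y \<in> {v \<in> polar TD. v \<bullet> A u = 0} \<and> z \<in> tangent_cone {v \<in> polar TD. v \<bullet> A u = 0} y \<longrightarrow> y = 0)
       \<longleftrightarrow> (\<forall>y z. (As y = 0 \<and> adjoint B y + As z = 0 \<and> y \<in> polar TD \<and> z \<in> polar TD) \<and> z \<bullet> A u = 0 \<longrightarrow> y = 0)"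
  proof
    assume L: "\<forall>y z. As y = 0 \<and> adjoint B y + As z = 0 \<and> y \<in> {v \<in> polar TD. v \<bullet> A u = 0} \<and> z \<in> tangent_cone {v \<in> polar TD. v \<bullet> A u = 0} y \<longrightarrow> y = 0"
    show "\<forall>y z. (As y = 0 \<and> adjoint B y + As z = 0 \<and> y \<in> polar TD \<and> z \<in> polar TD) \<and> z \<bullet> A u = 0 \<longrightarrow> y = 0"
    proof (intro allI impI)
      fix y z assume h: "(As y = 0 \<and> adjoint B y + As z = 0 \<and> y \<in> polar TD \<and> z \<in> polar TD) \<and> z \<bullet> A u = 0"
      then have "y \<bullet> A u = 0" using yAu by blast
      then have yN: "y \<in> N1" and zN: "z \<in> N1" using h unfolding N1_def by auto
      have "z \<in> tangent_cone N1 y" by (rule G2_cone[OF cN1 yN zN])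
      then show "y = 0" using L h yN unfolding N1_def by blast
    qed
  next
    assume R: "\<forall>y z. (As y = 0 \<and> adjoint B y + As z = 0 \<and> y \<in> polar TD \<and> z \<in> polar TD) \<and> z \<bullet> A u = 0 \<longrightarrow> y = 0"
    show "\<forall>y z. As y = 0 \<and> adjoint B y + As z = 0 \<and> y \<in> {v \<in> polar TD. v \<bullet> A u = 0} \<and> z \<in> tangent_cone {v \<in> polar TD. v \<bullet> A u = 0} y \<longrightarrow> y = 0"
    proof (intro allI impI)
      fix y z assume h: "As y = 0 \<and> adjoint B y + As z = 0 \<and> y \<in> {v \<in> polar TD. v \<bullet> A u = 0} \<and> z \<in> tangent_cone {v \<in> polar TD. v \<bullet> A u = 0} y"
      then have yN: "y \<in> N1" and zT: "z \<in> tangent_cone N1 y" and Ay: "As y = 0" unfolding N1_def by auto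
      obtain n where n: "n \<in> N1" "As n = As z" using TR[OF pN1 cN1 linAs yN Ay zT] by blast
      have "As y = 0 \<and> adjoint B y + As n = 0 \<and> y \<in> polar TD \<and> n \<in> polar TD" using h n yN unfolding N1_def by auto
      moreover have "n \<bullet> A u = 0" using n unfolding N1_def by auto
      ultimately show "y = 0" using R by blast
    qed
  qed
  have P4: "(\<forall>y z. (As y = 0 \<and> adjoint B y + As z = 0 \<and> y \<in> polar TD \<and> z \<in> polar TD) \<and> is_arg_max (\<lambda>yh. (1/2) * (yh \<bullet> B u)) (\<lambda>yh. yh \<in> polar TD \<and> As yh = 0) y
            \<longrightarrow> y = 0)
       \<longleftrightarrow> (\<forall>y z s. (As y = 0 \<and> adjoint B y + As z = 0 \<and> y \<in> polar TD \<and> z \<in> polar TD) \<and> A s + (1/2) *\<^sub>R B u \<in> Tu \<longrightarrow> y = 0)"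
  proof (cases "\<exists>yh. yh \<in> polar TD \<and> As yh = 0 \<and> yh \<bullet> B u > 0")
    case True
    then obtain yh where yh: "yh \<in> polar TD" "As yh = 0" "yh \<bullet> B u > 0" by blast
    have L: "\<not> is_arg_max (\<lambda>yh. (1/2) * (yh \<bullet> B u)) (\<lambda>yh. yh \<in> polar TD \<and> As yh = 0) y" for y
    proof
      assume am: "is_arg_max (\<lambda>yh. (1/2) * (yh \<bullet> B u)) (\<lambda>yh. yh \<in> polar TD \<and> As yh = 0) y"
      then have Py: "y \<in> polar TD" "As y = 0" by (simp_all add: is_arg_max_def)
      have "y + yh \<in> polar TD" using convex_cone_add[OF convex_cone_polar] Py yh by blast
      moreover have "As (y + yh) = 0" using Py yh linAs by (simp add: linear_add)
      moreover have "(1/2) * (y \<bullet> B u) < (1/2) * ((y + yh) \<bullet> B u)" using yh by (simp add: inner_add_left)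
      ultimately show False using am unfolding is_arg_max_def by blast
    qed
    have R: "A s + (1/2) *\<^sub>R B u \<notin> Tu" for s
    proof
      assume ws: "A s + (1/2) *\<^sub>R B u \<in> Tu"
      have "yh \<in> polar Tu" using N1_polTu yh yAu by blast
      then have "yh \<bullet> (A s + (1/2) *\<^sub>R B u) \<le> 0" using ws unfolding polar_def by blast
      moreover have "yh \<bullet> (A s + (1/2) *\<^sub>R B u) = (1/2) * (yh \<bullet> B u)"
        using adjA[of yh s] yh by (simp add: inner_add_right)
      ultimately show False using yh by simp
    qed
    show ?thesis using L R by blast
  next
    case False
    then have nE: "yh \<bullet> B u \<le> 0" if "yh \<in> polar TD" "As yh = 0" for yh using that by force
    have Cy0: "y \<bullet> B u = 0" if "As y = 0 \<and> adjoint B y + As z = 0 \<and> y \<in> polar TD \<and> z \<in> polar TD" for y z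
    proof -
      have "y \<bullet> B u = -(z \<bullet> A u)" using Cd that by blast
      moreover have "z \<bullet> A u \<le> 0" using ND_TD that AuTD by blast
      moreover have "y \<bullet> B u \<le> 0" using nE that by blast
      ultimately show ?thesis by simp
    qed
    have am: "is_arg_max (\<lambda>yh. (1/2) * (yh \<bullet> B u)) (\<lambda>yh. yh \<in> polar TD \<and> As yh = 0) y"
      if "As y = 0 \<and> adjoint B y + As z = 0 \<and> y \<in> polar TD \<and> z \<in> polar TD" for y z
    proof -
      have "\<not> (1/2) * (y \<bullet> B u) < (1/2) * (y' \<bullet> B u)" if "y' \<in> polar TD" "As y' = 0" for y'
        using nE[OF that] Cy0[OF \<open>As y = 0 \<and> adjoint B y + As z = 0 \<and> y \<in> polar TD \<and> z \<in> polar TD\<close>] by simp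
      then show ?thesis unfolding is_arg_max_def using that by blast
    qed
    have ex: "\<exists>s. A s + (1/2) *\<^sub>R B u \<in> Tu"
    proof -
      define M where "M = (\<Union>x\<in>TD. \<Union>y\<in>A ` UNIV. {x + y})"
      have fgM: "fingen M" unfolding M_def by (intro fingen_sum fingen_image MW[OF pTD cTD] fgU0 linA)
      show ?thesis
      proof (cases "(1/2) *\<^sub>R B u \<in> M")
        case True
        then obtain t p where tp: "t \<in> TD" "(1/2) *\<^sub>R B u = t + A p" unfolding M_def by blast
        have eq: "A (-p) + (1/2) *\<^sub>R B u = t" using tp linA by (simp add: linear_neg)
        have "A (-p) + (1/2) *\<^sub>R B u \<in> Tu" unfolding eq using tp(1) TD_Tu by blast
        then show ?thesis by blast
      next
        case False
        obtain c where c: "\<forall>x\<in>M. c \<bullet> x \<le> 0" "c \<bullet> ((1/2) *\<^sub>R B u) > 0"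
          using SEP[OF fingen_props(2)[OF fgM] fingen_props(1)[OF fgM] False] by blast
        have "c \<bullet> t \<le> 0" if "t \<in> TD" for t
        proof -
          have "t + A 0 \<in> M" unfolding M_def using that by blast
          then show ?thesis using c(1) A00 by fastforce
        qed
        then have cT: "c \<in> polar TD" unfolding polar_def by blast
        have "c \<bullet> A p \<le> 0" for p
        proof -
          have "0 + A p \<in> M" unfolding M_def using TD00 by blast
          then show ?thesis using c(1) by fastforce
        qed
        then have "As c = 0" by (rule AsZ)
        then have "c \<bullet> B u \<le> 0" using nE cT by blast
        then show ?thesis using c(2) by simp
      qed
    qed
    show ?thesis
    proof
      assume L: "\<forall>y z. (As y = 0 \<and> adjoint B y + As z = 0 \<and> y \<in> polar TD \<and> z \<in> polar TD) \<and> is_arg_max (\<lambda>yh. (1/2) * (yh \<bullet> B u)) (\<lambda>yh. yh \<in> polar TD \<and> As yh = 0) y \<longrightarrow> y = 0"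
      show "\<forall>y z s. (As y = 0 \<and> adjoint B y + As z = 0 \<and> y \<in> polar TD \<and> z \<in> polar TD) \<and> A s + (1/2) *\<^sub>R B u \<in> Tu \<longrightarrow> y = 0"
        using L am by blast
    next
      assume R: "\<forall>y z s. (As y = 0 \<and> adjoint B y + As z = 0 \<and> y \<in> polar TD \<and> z \<in> polar TD) \<and> A s + (1/2) *\<^sub>R B u \<in> Tu \<longrightarrow> y = 0"
      show "\<forall>y z. (As y = 0 \<and> adjoint B y + As z = 0 \<and> y \<in> polar TD \<and> z \<in> polar TD) \<and> is_arg_max (\<lambda>yh. (1/2) * (yh \<bullet> B u)) (\<lambda>yh. yh \<in> polar TD \<and> As yh = 0) y \<longrightarrow> y = 0"
        using R ex by blast
    qed
  qed
  have N2props: "polyhedron (normal_cone Tu w) \<and> convex_cone (normal_cone Tu w)" if "w \<in> Tu" for w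
  proof -
    have "normal_cone Tu w = convex_cone hull (a ` I2) \<inter> {v. w \<bullet> v = 0}"
      using NC_cone[OF cTu that] Tu_hull by (auto simp: inner_commute)
    then show ?thesis
      by (simp add: polyhedron_Int polyhedron_convex_cone_hull polyhedron_hyperplane finI2
          convex_cone_Int convex_cone_convex_cone_hull convex_cone_hyperplane)
  qed
  have CORE: "\<exists>s l. A s + (1/2) *\<^sub>R B u \<in> Tu \<and> adjoint B y + As l = 0 \<and> y \<in> normal_cone Tu (A s + (1/2) *\<^sub>R B u) \<and> l \<in> normal_cone Tu (A s + (1/2) *\<^sub>R B u)"
    if Cyz: "As y = 0 \<and> adjoint B y + As z = 0 \<and> y \<in> polar TD \<and> z \<in> polar TD" and s0: "A s0 + (1/2) *\<^sub>R B u \<in> Tu" for y z s0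
  proof -
    define h where "h = adjoint B y"
    have wlin: "A (s + t *\<^sub>R d) + (1/2) *\<^sub>R B u = (A s + (1/2) *\<^sub>R B u) + t *\<^sub>R A d" for s t d
      using linA by (simp add: linear_add linear_cmul algebra_simps)
    have yTu: "y \<in> polar Tu" using N1_polTu Cyz yAu by blast
    have "y \<bullet> (A s0 + (1/2) *\<^sub>R B u) \<le> 0" using yTu s0 unfolding polar_def by blast
    moreover have "y \<bullet> (A s0 + (1/2) *\<^sub>R B u) = (1/2) * (y \<bullet> B u)" using adjA[of y s0] Cyz by (simp add: inner_add_right)
    ultimately have "y \<bullet> B u \<le> 0" by simp
    moreover have "y \<bullet> B u = -(z \<bullet> A u)" using Cd Cyz by blast
    moreover have "z \<bullet> A u \<le> 0" using ND_TD Cyz AuTD by blast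
    ultimately have yB: "y \<bullet> B u = 0" and zAu: "z \<bullet> A u = 0" by auto
    have zTu: "z \<in> polar Tu" using N1_polTu Cyz zAu by blast
    define c where "c i = As (a i)" for i
    define e where "e i = - (a i \<bullet> B u) / 2" for i
    have Fiff: "A s + (1/2) *\<^sub>R B u \<in> Tu \<longleftrightarrow> s \<in> {s. \<forall>i\<in>I2. c i \<bullet> s \<le> e i}" for s
      unfolding Tu_def hc_def c_def e_def by (auto simp: adjA inner_add_right)
    have hz: "adjoint B y = - As z" using Cyz by (simp add: eq_neg_iff_add_eq_0)
    have bd: "(1/2) * (z \<bullet> B u) \<le> h \<bullet> s" if "s \<in> {s. \<forall>i\<in>I2. c i \<bullet> s \<le> e i}" for s
    proof -
      have "A s + (1/2) *\<^sub>R B u \<in> Tu" using Fiff that by blast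
      then have "z \<bullet> (A s + (1/2) *\<^sub>R B u) \<le> 0" using zTu unfolding polar_def by blast
      moreover have "h \<bullet> s = - (z \<bullet> A s)" unfolding h_def hz using adjA[of z s] by simp
      ultimately show ?thesis by (simp add: inner_add_right)
    qed
    have s0F: "s0 \<in> {s. \<forall>i\<in>I2. c i \<bullet> s \<le> e i}" using Fiff s0 by blast
    obtain ss where ss: "ss \<in> {s. \<forall>i\<in>I2. c i \<bullet> s \<le> e i}" "\<forall>s'\<in>{s. \<forall>i\<in>I2. c i \<bullet> s \<le> e i}. h \<bullet> ss \<le> h \<bullet> s'"
      using ATT[OF finI2 s0F bd] by blast
    define ws where "ws = A ss + (1/2) *\<^sub>R B u"
    have wsTu: "ws \<in> Tu" using Fiff ss(1) ws_def by blast
    define J where "J = {i \<in> I2. a i \<bullet> ws = 0}"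
    have finJ: "finite J" using finI2 J_def by simp
    have mh: "-h \<in> polar (hc c J)" unfolding polar_def
    proof (clarify)
      fix d assume d: "d \<in> hc c J"
      have p1: "\<forall>i\<in>I2. a i \<bullet> ws \<le> (\<lambda>_. 0) i" using wsTu unfolding Tu_def hc_def by simp
      have p2: "\<forall>i\<in>I2. a i \<bullet> ws = (\<lambda>_. 0) i \<longrightarrow> a i \<bullet> A d \<le> 0"
        using d unfolding hc_def J_def c_def by (auto simp: adjA)
      obtain t :: real where t: "t > 0" "\<forall>r. 0 \<le> r \<and> r \<le> t \<longrightarrow> (\<forall>i\<in>I2. a i \<bullet> (ws + r *\<^sub>R A d) \<le> (\<lambda>_. 0) i)"
        using LOC[OF finI2 p1 p2] by blast
      have "ws + t *\<^sub>R A d \<in> Tu" using t unfolding Tu_def hc_def by auto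
      then have "A (ss + t *\<^sub>R d) + (1/2) *\<^sub>R B u \<in> Tu" unfolding wlin ws_def .
      then have "h \<bullet> ss \<le> h \<bullet> (ss + t *\<^sub>R d)" using ss(2) Fiff by blast
      then have "0 \<le> t * (h \<bullet> d)" by (simp add: inner_add_right)
      then have "h \<bullet> d \<ge> 0" using t(1) by (simp add: zero_le_mult_iff)
      then show "- h \<bullet> d \<le> 0" by simp
    qed
    have "polar (hc c J) = convex_cone hull (c ` J)" by (rule FK[OF finJ])
    also have "\<dots> = convex_cone hull (As ` (a ` J))" by (simp add: image_image c_def)
    also have "\<dots> = As ` (convex_cone hull (a ` J))" by (rule convex_cone_hull_linear_image[OF linAs])
    finally obtain l where l: "l \<in> convex_cone hull (a ` J)" "As l = -h" using mh by (metis imageE)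
    have Q: "convex_cone hull (a ` J) \<subseteq> polar Tu \<inter> {v. ws \<bullet> v = 0}"
    proof (rule hull_minimal)
      show "a ` J \<subseteq> polar Tu \<inter> {v. ws \<bullet> v = 0}"
        unfolding J_def Tu_def polar_def hc_def by (auto simp: inner_commute)
      show "convex_cone (polar Tu \<inter> {v. ws \<bullet> v = 0})"
        by (intro convex_cone_Int convex_cone_polar convex_cone_hyperplane)
    qed
    have NCws: "normal_cone Tu ws = {v \<in> polar Tu. v \<bullet> ws = 0}" by (rule NC_cone[OF cTu wsTu])
    have lN: "l \<in> normal_cone Tu ws" using Q l(1) NCws by (auto simp: inner_commute)
    have "y \<bullet> ws = 0" unfolding ws_def using adjA[of y ss] Cyz yB by (simp add: inner_add_right)
    then have yN: "y \<in> normal_cone Tu ws" using NCws yTu by simp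
    have "adjoint B y + As l = 0" using l(2) h_def by simp
    then show ?thesis using wsTu lN yN ws_def by blast
  qed
  have P5: "(\<forall>s y z. As y = 0 \<and> adjoint B y + As z = 0 \<and> y \<in> normal_cone Tu (A s + (1/2) *\<^sub>R B u)
              \<and> z \<in> normal_cone Tu (A s + (1/2) *\<^sub>R B u) \<longrightarrow> y = 0)
       \<longleftrightarrow> (\<forall>y z s. (As y = 0 \<and> adjoint B y + As z = 0 \<and> y \<in> polar TD \<and> z \<in> polar TD) \<and> A s + (1/2) *\<^sub>R B u \<in> Tu \<longrightarrow> y = 0)"
  proof
    assume L: "\<forall>s y z. As y = 0 \<and> adjoint B y + As z = 0 \<and> y \<in> normal_cone Tu (A s + (1/2) *\<^sub>R B u)
              \<and> z \<in> normal_cone Tu (A s + (1/2) *\<^sub>R B u) \<longrightarrow> y = 0"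
    show "\<forall>y z s. (As y = 0 \<and> adjoint B y + As z = 0 \<and> y \<in> polar TD \<and> z \<in> polar TD) \<and> A s + (1/2) *\<^sub>R B u \<in> Tu \<longrightarrow> y = 0"
    proof (intro allI impI)
      fix y z s assume h: "(As y = 0 \<and> adjoint B y + As z = 0 \<and> y \<in> polar TD \<and> z \<in> polar TD) \<and> A s + (1/2) *\<^sub>R B u \<in> Tu"
      then obtain s' l where "A s' + (1/2) *\<^sub>R B u \<in> Tu \<and> adjoint B y + As l = 0 \<and> y \<in> normal_cone Tu (A s' + (1/2) *\<^sub>R B u) \<and> l \<in> normal_cone Tu (A s' + (1/2) *\<^sub>R B u)"
        using CORE by blast
      then show "y = 0" using L h by blast
    qed
  next
    assume R: "\<forall>y z s. (As y = 0 \<and> adjoint B y + As z = 0 \<and> y \<in> polar TD \<and> z \<in> polar TD) \<and> A s + (1/2) *\<^sub>R B u \<in> Tu \<longrightarrow> y = 0"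
    show "\<forall>s y z. As y = 0 \<and> adjoint B y + As z = 0 \<and> y \<in> normal_cone Tu (A s + (1/2) *\<^sub>R B u)
              \<and> z \<in> normal_cone Tu (A s + (1/2) *\<^sub>R B u) \<longrightarrow> y = 0"
    proof (intro allI impI)
      fix s y z assume h: "As y = 0 \<and> adjoint B y + As z = 0 \<and> y \<in> normal_cone Tu (A s + (1/2) *\<^sub>R B u)
              \<and> z \<in> normal_cone Tu (A s + (1/2) *\<^sub>R B u)"
      have wsTu: "A s + (1/2) *\<^sub>R B u \<in> Tu" using h unfolding normal_cone_def by (auto split: if_splits)
      have "y \<in> polar Tu" "z \<in> polar Tu" using h NC_cone[OF cTu wsTu] by auto
      then have "y \<in> polar TD" "z \<in> polar TD" using polTu_ND by auto
      then show "y = 0" using R h wsTu by blast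
    qed
  qed
  have P6: "(\<forall>s y z. As y = 0 \<and> adjoint B y + As z = 0 \<and> y \<in> normal_cone Tu (A s + (1/2) *\<^sub>R B u)
              \<and> z \<in> tangent_cone (normal_cone Tu (A s + (1/2) *\<^sub>R B u)) y \<longrightarrow> y = 0)
       \<longleftrightarrow> (\<forall>y z s. (As y = 0 \<and> adjoint B y + As z = 0 \<and> y \<in> polar TD \<and> z \<in> polar TD) \<and> A s + (1/2) *\<^sub>R B u \<in> Tu \<longrightarrow> y = 0)"
  proof
    assume L: "\<forall>s y z. As y = 0 \<and> adjoint B y + As z = 0 \<and> y \<in> normal_cone Tu (A s + (1/2) *\<^sub>R B u)
              \<and> z \<in> tangent_cone (normal_cone Tu (A s + (1/2) *\<^sub>R B u)) y \<longrightarrow> y = 0"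
    show "\<forall>y z s. (As y = 0 \<and> adjoint B y + As z = 0 \<and> y \<in> polar TD \<and> z \<in> polar TD) \<and> A s + (1/2) *\<^sub>R B u \<in> Tu \<longrightarrow> y = 0"
    proof (intro allI impI)
      fix y z s assume h: "(As y = 0 \<and> adjoint B y + As z = 0 \<and> y \<in> polar TD \<and> z \<in> polar TD) \<and> A s + (1/2) *\<^sub>R B u \<in> Tu"
      then obtain s' l where sl: "A s' + (1/2) *\<^sub>R B u \<in> Tu" "adjoint B y + As l = 0" "y \<in> normal_cone Tu (A s' + (1/2) *\<^sub>R B u)" "l \<in> normal_cone Tu (A s' + (1/2) *\<^sub>R B u)"
        using CORE by blast
      have "l \<in> tangent_cone (normal_cone Tu (A s' + (1/2) *\<^sub>R B u)) y"
        using G2_cone N2props[OF sl(1)] sl(3,4) by blast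
      then show "y = 0" using L h sl by blast
    qed
  next
    assume R: "\<forall>y z s. (As y = 0 \<and> adjoint B y + As z = 0 \<and> y \<in> polar TD \<and> z \<in> polar TD) \<and> A s + (1/2) *\<^sub>R B u \<in> Tu \<longrightarrow> y = 0"
    show "\<forall>s y z. As y = 0 \<and> adjoint B y + As z = 0 \<and> y \<in> normal_cone Tu (A s + (1/2) *\<^sub>R B u)
              \<and> z \<in> tangent_cone (normal_cone Tu (A s + (1/2) *\<^sub>R B u)) y \<longrightarrow> y = 0"
    proof (intro allI impI)
      fix s y z assume h: "As y = 0 \<and> adjoint B y + As z = 0 \<and> y \<in> normal_cone Tu (A s + (1/2) *\<^sub>R B u)
              \<and> z \<in> tangent_cone (normal_cone Tu (A s + (1/2) *\<^sub>R B u)) y"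
      have wsTu: "A s + (1/2) *\<^sub>R B u \<in> Tu" using h unfolding normal_cone_def by (auto split: if_splits)
      have Ay: "As y = 0" using h by blast
      have yN: "y \<in> normal_cone Tu (A s + (1/2) *\<^sub>R B u)" using h by blast
      have zT: "z \<in> tangent_cone (normal_cone Tu (A s + (1/2) *\<^sub>R B u)) y" using h by blast
      obtain n where n: "n \<in> normal_cone Tu (A s + (1/2) *\<^sub>R B u)" "As n = As z"
        using TR[OF conjunct1[OF N2props[OF wsTu]] conjunct2[OF N2props[OF wsTu]] linAs yN Ay zT] by blast
      have "y \<in> polar Tu" "n \<in> polar Tu" using yN n(1) NC_cone[OF cTu wsTu] by auto
      then have "y \<in> polar TD" "n \<in> polar TD" using polTu_ND by auto
      moreover have "adjoint B y + As n = 0" using h n(2) by simp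
      ultimately show "y = 0" using R Ay wsTu by blast
    qed
  qed
  show ?thesis
    unfolding Let_def A_def[symmetric] As_def[symmetric] hess_eq B_eq TD_eq ND_eq N1_eq Tu_eq
    by (intro conjI P1 P2 P3 P4 P5 P6)
qed

end
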